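(* Let $(X,d)$ be a compact metric space and $\mathcal{W}$ a uniformly bounded open cover of $X$. Let $\mu=\sum_{i=1}^nm_i\delta_{x_i}\in\mathrm{Viet}^{\mathrm{m}}(\mathcal{W})$ (distinct $x_i$, $m_i>0$), let $\mathcal{U}=\{U_1,\dots,U_n\}$ be pairwise disjoint open subsets of $X$ with $x_i\in U_i$ and $\bigcup_iU_i$ contained in an element of $\mathcal{W}$, let $\varepsilon>0$, and let $B(\mu)=\tilde B(\mu)\cap\mathrm{Viet}^{\mathrm{m}}(\mathcal{W})$ where $\tilde B(\mu)$ is an open Wasserstein ball centered at $\mu$ in $P(X)$. Then the multivalued map $F\colon P_{\mathcal{U}}\cap B(\mu)\to P(X)$, $F(\zeta)=\{\nu\in P(\mu,\mathcal{U},\varepsilon) : \mathrm{supp}(\nu)\subseteq\mathrm{supp}(\zeta)\}$, is lower semi-continuous.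
   Context: $P(X)$ is the space of Borel probability measures on $X$ (weak topology, equivalently Wasserstein metric). $\mathrm{Viet}^{\mathrm{m}}(\mathcal{W})\subseteq P(X)$ is the set of finitely supported probability measures whose support is contained in some element of $\mathcal{W}$. For finitely supported $\nu=\sum_jw_j\delta_{a_j}$ and $Y\subseteq X$, $\nu(Y)=\sum_{a_j\in Y}w_j$. $P_U=\{\nu\in\mathrm{Viet}^{\mathrm{m}}(\mathcal{W}):\mathrm{supp}(\nu)\cap U\ne\varnothing\}$, $P_{\mathcal{U}}=\bigcap_iP_{U_i}$, $P(\mu,\mathcal{U},\varepsilon)=\{\nu\in\mathrm{Viet}^{\mathrm{m}}(\mathcal{W}) : \mathrm{supp}(\nu)\subseteq\bigcup_iU_i,\ |\nu(U_i)-\mu(U_i)|\le\varepsilon\ \forall i\}$. A multivalued map $F\colon A\to Y$ is lower semi-continuous if for every open $S\subseteq Y$ the set $\{a\in A: F(a)\cap S\ne\varnothing\}$ is open in $A$. *)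

theory Defs
  imports "HOL-Analysis.Analysis"
begin

text \<open>Finitely supported (probability) measures on a metric space are represented
  by their weight functions \<open>'a \<Rightarrow> real\<close>.\<close>

definition fsupp :: "('a \<Rightarrow> real) \<Rightarrow> 'a set" where
  "fsupp \<nu> = {x. \<nu> x \<noteq> 0}"

definition FinP :: "'a set \<Rightarrow> ('a \<Rightarrow> real) set" where
  "FinP X = {\<nu>. (\<forall>x. 0 \<le> \<nu> x) \<and> finite (fsupp \<nu>) \<and> fsupp \<nu> \<subseteq> X
                 \<and> sum \<nu> (fsupp \<nu>) = 1}"

definition fmass :: "('a \<Rightarrow> real) \<Rightarrow> 'a set \<Rightarrow> real" where
  "fmass \<nu> Y = sum \<nu> (fsupp \<nu> \<inter> Y)"

definition VietM :: "'a set \<Rightarrow> 'a set set \<Rightarrow> ('a \<Rightarrow> real) set" where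
  "VietM X W = {\<nu> \<in> FinP X. \<exists>w\<in>W. fsupp \<nu> \<subseteq> w}"

definition coupling :: "('a \<Rightarrow> real) \<Rightarrow> ('a \<Rightarrow> real) \<Rightarrow> ('a \<times> 'a \<Rightarrow> real) \<Rightarrow> bool" where
  "coupling \<mu> \<nu> \<pi> \<longleftrightarrow> (\<forall>p. 0 \<le> \<pi> p) \<and> finite (fsupp \<pi>)
     \<and> (\<forall>x. (\<Sum>p\<in>{p\<in>fsupp \<pi>. fst p = x}. \<pi> p) = \<mu> x)
     \<and> (\<forall>y. (\<Sum>p\<in>{p\<in>fsupp \<pi>. snd p = y}. \<pi> p) = \<nu> y)"

definition wass :: "('a::metric_space \<Rightarrow> real) \<Rightarrow> ('a \<Rightarrow> real) \<Rightarrow> real" where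
  "wass \<mu> \<nu> = Inf {(\<Sum>p\<in>fsupp \<pi>. \<pi> p * dist (fst p) (snd p)) | \<pi>. coupling \<mu> \<nu> \<pi>}"

definition wopen_in :: "('a::metric_space \<Rightarrow> real) set \<Rightarrow> ('a \<Rightarrow> real) set \<Rightarrow> bool" where
  "wopen_in A S \<longleftrightarrow> S \<subseteq> A \<and>
     (\<forall>\<nu>\<in>S. \<exists>e>0. \<forall>\<nu>'\<in>A. wass \<nu> \<nu>' < e \<longrightarrow> \<nu>' \<in> S)"

text \<open>Open subsets
  of P(X) are tested through their traces on the finitely supported measures.\<close>
definition lsc_map :: "'a::metric_space set \<Rightarrow> ('a \<Rightarrow> real) set
    \<Rightarrow> (('a \<Rightarrow> real) \<Rightarrow> ('a \<Rightarrow> real) set) \<Rightarrow> bool" where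
  "lsc_map X A F \<longleftrightarrow> (\<forall>S. wopen_in (FinP X) S \<longrightarrow> wopen_in A {\<zeta>\<in>A. F \<zeta> \<inter> S \<noteq> {}})"

definition P_Ucal :: "'a set \<Rightarrow> 'a set set \<Rightarrow> (nat \<Rightarrow> 'a set) \<Rightarrow> nat \<Rightarrow> ('a \<Rightarrow> real) set" where
  "P_Ucal X W U n = {\<nu> \<in> VietM X W. \<forall>i<n. fsupp \<nu> \<inter> U i \<noteq> {}}"

definition P_mu :: "'a set \<Rightarrow> 'a set set \<Rightarrow> ('a \<Rightarrow> real) \<Rightarrow> (nat \<Rightarrow> 'a set) \<Rightarrow> nat \<Rightarrow> real
    \<Rightarrow> ('a \<Rightarrow> real) set" where
  "P_mu X W \<mu> U n \<epsilon> = {\<nu> \<in> VietM X W. fsupp \<nu> \<subseteq> (\<Union>i<n. U i)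
      \<and> (\<forall>i<n. \<bar>fmass \<nu> (U i) - fmass \<mu> (U i)\<bar> \<le> \<epsilon>)}"

end

theory Submission
  imports Defs
begin

lemma prod_coupling:
  assumes "\<zeta> \<in> FinP X" "\<zeta>' \<in> FinP X"
  shows "coupling \<zeta> \<zeta>' (\<lambda>p. \<zeta> (fst p) * \<zeta>' (snd p))"
proof -
  let ?A = "fsupp \<zeta>" and ?B = "fsupp \<zeta>'"
  have fA: "finite ?A" and fB: "finite ?B" and sA: "sum \<zeta> ?A = 1" and sB: "sum \<zeta>' ?B = 1"
    and nA: "\<forall>x. 0 \<le> \<zeta> x" and nB: "\<forall>x. 0 \<le> \<zeta>' x"
    using assms by (auto simp: FinP_def)
  have fs: "fsupp (\<lambda>p. \<zeta> (fst p) * \<zeta>' (snd p)) = ?A \<times> ?B"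
    by (auto simp: fsupp_def)
  have m1: "(\<Sum>p\<in>{p\<in>?A \<times> ?B. fst p = x}. \<zeta> (fst p) * \<zeta>' (snd p)) = \<zeta> x" for x
  proof (cases "x \<in> ?A")
    case True
    then have "{p\<in>?A \<times> ?B. fst p = x} = (\<lambda>y. (x,y)) ` ?B" by auto
    then have "(\<Sum>p\<in>{p\<in>?A \<times> ?B. fst p = x}. \<zeta> (fst p) * \<zeta>' (snd p)) = (\<Sum>y\<in>?B. \<zeta> x * \<zeta>' y)"
      by (simp add: sum.reindex inj_on_def)
    also have "\<dots> = \<zeta> x" using sB by (simp add: sum_distrib_left[symmetric])
    finally show ?thesis .
  next
    case False
    then have "{p\<in>?A \<times> ?B. fst p = x} = {}" by auto
    then show ?thesis using False by (simp add: fsupp_def)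
  qed
  have m2: "(\<Sum>p\<in>{p\<in>?A \<times> ?B. snd p = y}. \<zeta> (fst p) * \<zeta>' (snd p)) = \<zeta>' y" for y
  proof (cases "y \<in> ?B")
    case True
    then have "{p\<in>?A \<times> ?B. snd p = y} = (\<lambda>x. (x,y)) ` ?A" by auto
    then have "(\<Sum>p\<in>{p\<in>?A \<times> ?B. snd p = y}. \<zeta> (fst p) * \<zeta>' (snd p)) = (\<Sum>x\<in>?A. \<zeta> x * \<zeta>' y)"
      by (simp add: sum.reindex inj_on_def)
    also have "\<dots> = \<zeta>' y" using sA by (simp add: sum_distrib_right[symmetric])
    finally show ?thesis .
  next
    case False
    then have "{p\<in>?A \<times> ?B. snd p = y} = {}" by auto
    then show ?thesis using False by (simp add: fsupp_def)
  qed
  show ?thesis unfolding coupling_def fs using m1 m2 fA fB nA nB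
    by (auto intro: mult_nonneg_nonneg)
qed

lemma cost_nonneg:
  assumes "coupling \<mu> \<nu> \<pi>"
  shows "0 \<le> (\<Sum>p\<in>fsupp \<pi>. \<pi> p * dist (fst p) (snd p))"
  using assms by (auto simp: coupling_def intro!: sum_nonneg)

lemma wass_le:
  assumes "coupling \<mu> \<nu> \<pi>"
  shows "wass \<mu> \<nu> \<le> (\<Sum>p\<in>fsupp \<pi>. \<pi> p * dist (fst p) (snd p))"
  unfolding wass_def
  apply (rule cInf_lower)
  using assms apply blast
  unfolding bdd_below_def using cost_nonneg by blast

lemma near_point:
  assumes "\<zeta> \<in> FinP X" "\<zeta>' \<in> FinP X" "\<zeta> a > 0" "\<delta> > 0" "wass \<zeta> \<zeta>' < \<zeta> a * \<delta>"
  shows "\<exists>b. b \<in> fsupp \<zeta>' \<and> dist a b < \<delta>"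
proof -
  let ?C = "{(\<Sum>p\<in>fsupp \<pi>. \<pi> p * dist (fst p) (snd p)) | \<pi>. coupling \<zeta> \<zeta>' \<pi>}"
  have "?C \<noteq> {}" using prod_coupling[OF assms(1,2)] by blast
  then obtain \<pi> where cp: "coupling \<zeta> \<zeta>' \<pi>"
    and lt: "(\<Sum>p\<in>fsupp \<pi>. \<pi> p * dist (fst p) (snd p)) < \<zeta> a * \<delta>"
    using cInf_lessD[of ?C] assms(5) unfolding wass_def by blast
  have nn: "\<forall>p. 0 \<le> \<pi> p" and fin: "finite (fsupp \<pi>)"
    and m1: "(\<Sum>p\<in>{p\<in>fsupp \<pi>. fst p = a}. \<pi> p) = \<zeta> a"
    and m2: "\<And>y. (\<Sum>p\<in>{p\<in>fsupp \<pi>. snd p = y}. \<pi> p) = \<zeta>' y"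
    using cp unfolding coupling_def by auto
  show ?thesis
  proof (rule ccontr)
    assume H: "\<not> ?thesis"
    have "\<zeta> a * \<delta> = (\<Sum>p\<in>{p\<in>fsupp \<pi>. fst p = a}. \<pi> p * \<delta>)"
      using m1 by (simp add: sum_distrib_right[symmetric])
    also have "\<dots> \<le> (\<Sum>p\<in>{p\<in>fsupp \<pi>. fst p = a}. \<pi> p * dist (fst p) (snd p))"
    proof (rule sum_mono)
      fix p assume p: "p \<in> {p\<in>fsupp \<pi>. fst p = a}"
      have "\<pi> p > 0" using p nn[rule_format, of p] by (auto simp: fsupp_def less_le)
      then have "\<zeta>' (snd p) > 0"
        using m2[of "snd p"] sum_nonneg_leq_bound[of "{q\<in>fsupp \<pi>. snd q = snd p}" \<pi>]
        by (smt (verit, ccfv_SIG) fin finite_subset mem_Collect_eq nn p subsetI sum_nonneg_0)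
      then have "snd p \<in> fsupp \<zeta>'" by (auto simp: fsupp_def)
      then have "dist a (snd p) \<ge> \<delta>" using H by auto
      then show "\<pi> p * \<delta> \<le> \<pi> p * dist (fst p) (snd p)"
        using p nn[rule_format, of p] by (auto intro: mult_left_mono)
    qed
    also have "\<dots> \<le> (\<Sum>p\<in>fsupp \<pi>. \<pi> p * dist (fst p) (snd p))"
      by (rule sum_mono2) (use fin nn in auto)
    finally show False using lt by simp
  qed
qed

definition push :: "('a \<Rightarrow> real) \<Rightarrow> ('a \<Rightarrow> 'a) \<Rightarrow> 'a \<Rightarrow> real" where
  "push \<nu> f b = (\<Sum>a\<in>{a\<in>fsupp \<nu>. f a = b}. \<nu> a)"

lemma push_supp:
  assumes "\<nu> \<in> FinP X"
  shows "fsupp (push \<nu> f) \<subseteq> f ` fsupp \<nu>"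
proof
  fix b assume "b \<in> fsupp (push \<nu> f)"
  have "{a\<in>fsupp \<nu>. f a = b} \<noteq> {}" proof (rule notI)
    assume "{a\<in>fsupp \<nu>. f a = b} = {}"
    then have "push \<nu> f b = 0" unfolding push_def by (simp only: sum.empty)
    then show False using \<open>b \<in> fsupp (push \<nu> f)\<close> by (simp add: fsupp_def)
  qed
  then show "b \<in> f ` fsupp \<nu>" by auto
qed

lemma push_mass:
  assumes "\<nu> \<in> FinP X"
  shows "sum (push \<nu> f) (fsupp (push \<nu> f) \<inter> V) = (\<Sum>a\<in>{a\<in>fsupp \<nu>. f a \<in> V}. \<nu> a)"
proof -
  have fD: "finite (fsupp \<nu>)" using assms by (auto simp: FinP_def)
  have "sum (push \<nu> f) (fsupp (push \<nu> f) \<inter> V) = sum (push \<nu> f) (f ` fsupp \<nu> \<inter> V)"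
    apply (rule sum.mono_neutral_left)
    using push_supp[OF assms, of f] fD by (auto simp: fsupp_def)
  also have "\<dots> = (\<Sum>b\<in>f ` fsupp \<nu> \<inter> V. \<Sum>a\<in>{a\<in>{a\<in>fsupp \<nu>. f a \<in> V}. f a = b}. \<nu> a)"
    unfolding push_def
  proof (rule sum.cong)
    fix b assume "b \<in> f ` fsupp \<nu> \<inter> V"
    then have "{a\<in>{a\<in>fsupp \<nu>. f a \<in> V}. f a = b} = {a\<in>fsupp \<nu>. f a = b}" by auto
    then show "(\<Sum>a\<in>{a\<in>fsupp \<nu>. f a = b}. \<nu> a) = (\<Sum>a\<in>{a\<in>{a\<in>fsupp \<nu>. f a \<in> V}. f a = b}. \<nu> a)" by simp
  qed simp
  also have "\<dots> = (\<Sum>a\<in>{a\<in>fsupp \<nu>. f a \<in> V}. \<nu> a)"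
    by (rule sum.group) (use fD in \<open>auto simp del: sum.group\<close>)
  finally show ?thesis .
qed

lemma push_FinP:
  assumes "\<nu> \<in> FinP X" "f ` fsupp \<nu> \<subseteq> X"
  shows "push \<nu> f \<in> FinP X"
proof -
  have fD: "finite (fsupp \<nu>)" and nn: "\<forall>x. 0 \<le> \<nu> x" and s1: "sum \<nu> (fsupp \<nu>) = 1"
    using assms by (auto simp: FinP_def)
  have "\<forall>x. 0 \<le> push \<nu> f x" unfolding push_def using nn by (auto intro: sum_nonneg)
  moreover have "finite (fsupp (push \<nu> f))"
    using push_supp[OF assms(1)] fD finite_subset by blast
  moreover have "fsupp (push \<nu> f) \<subseteq> X" using push_supp[OF assms(1)] assms(2) by blast
  moreover have "sum (push \<nu> f) (fsupp (push \<nu> f)) = 1"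
    using push_mass[OF assms(1), of f UNIV] s1 by simp
  ultimately show ?thesis unfolding FinP_def by blast
qed

lemma push_wass:
  assumes "\<nu> \<in> FinP X"
  shows "wass \<nu> (push \<nu> f) \<le> (\<Sum>a\<in>fsupp \<nu>. \<nu> a * dist a (f a))"
proof -
  let ?D = "fsupp \<nu>"
  have fD: "finite ?D" and nn: "\<forall>x. 0 \<le> \<nu> x"
    using assms by (auto simp: FinP_def)
  define \<pi> where "\<pi> p = (if fst p \<in> ?D \<and> snd p = f (fst p) then \<nu> (fst p) else 0)" for p
  let ?g = "\<lambda>a. (a, f a)"
  have fs: "fsupp \<pi> = ?g ` ?D" by (auto simp: \<pi>_def fsupp_def)
  have inj: "inj_on ?g A" for A by (auto simp: inj_on_def)
  have re: "(\<Sum>p\<in>{p\<in>fsupp \<pi>. P p}. h p) = (\<Sum>a\<in>{a\<in>?D. P (?g a)}. h (?g a))" for P h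
  proof -
    have "{p\<in>fsupp \<pi>. P p} = ?g ` {a\<in>?D. P (?g a)}" unfolding fs by auto
    then show ?thesis using sum.reindex[OF inj, of h] by (simp add: comp_def)
  qed
  have c: "coupling \<nu> (push \<nu> f) \<pi>"
    unfolding coupling_def
  proof (intro conjI allI)
    show "0 \<le> \<pi> p" for p using nn by (simp add: \<pi>_def)
    show "finite (fsupp \<pi>)" using fs fD by simp
    show "(\<Sum>p\<in>{p\<in>fsupp \<pi>. fst p = x}. \<pi> p) = \<nu> x" for x
    proof -
      have "(\<Sum>p\<in>{p\<in>fsupp \<pi>. fst p = x}. \<pi> p) = (\<Sum>a\<in>{a\<in>?D. a = x}. \<nu> a)"
        unfolding re by (rule sum.cong) (auto simp: \<pi>_def)
      also have "\<dots> = \<nu> x"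
      proof (cases "x \<in> ?D")
        case True
        then have "{a\<in>?D. a = x} = {x}" by auto
        then show ?thesis by simp
      next
        case False
        then have "{a\<in>?D. a = x} = {}" by auto
        then show ?thesis using False by (simp add: fsupp_def)
      qed
      finally show ?thesis .
    qed
    show "(\<Sum>p\<in>{p\<in>fsupp \<pi>. snd p = y}. \<pi> p) = push \<nu> f y" for y
      unfolding re push_def by (rule sum.cong) (auto simp: \<pi>_def)
  qed
  have "(\<Sum>p\<in>fsupp \<pi>. \<pi> p * dist (fst p) (snd p)) = (\<Sum>a\<in>?D. \<nu> a * dist a (f a))"
    unfolding fs sum.reindex[OF inj] by (simp add: \<pi>_def)
  then show ?thesis using wass_le[OF c] by simp
qed

theorem proposition4p9:
  fixes X :: "'a::metric_space set" and W :: "'a set set"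
    and \<mu> :: "'a \<Rightarrow> real" and x :: "nat \<Rightarrow> 'a" and n :: nat
    and U :: "nat \<Rightarrow> 'a set" and \<epsilon> r :: real
  assumes "compact X"
    and "\<forall>w\<in>W. openin (top_of_set X) w" and "\<Union>W = X"
    and "\<exists>B. \<forall>w\<in>W. \<forall>a\<in>w. \<forall>b\<in>w. dist a b \<le> B"
    and "\<mu> \<in> VietM X W"
    and "inj_on x {..<n}" and "fsupp \<mu> = x ` {..<n}"
    and "\<forall>i<n. openin (top_of_set X) (U i)"
    and "\<forall>i<n. \<forall>j<n. i \<noteq> j \<longrightarrow> U i \<inter> U j = {}"
    and "\<forall>i<n. x i \<in> U i"
    and "\<exists>w\<in>W. (\<Union>i<n. U i) \<subseteq> w"
    and "\<epsilon> > 0" and "r > 0"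
  shows "lsc_map X (P_Ucal X W U n \<inter> {\<nu> \<in> VietM X W. wass \<mu> \<nu> < r})
           (\<lambda>\<zeta>. {\<nu> \<in> P_mu X W \<mu> U n \<epsilon>. fsupp \<nu> \<subseteq> fsupp \<zeta>})"
  unfolding lsc_map_def
proof (intro allI impI)
  fix S assume So: "wopen_in (FinP X) S"
  define A where "A = P_Ucal X W U n \<inter> {\<nu> \<in> VietM X W. wass \<mu> \<nu> < r}"
  define F where "F = (\<lambda>\<zeta>. {\<nu> \<in> P_mu X W \<mu> U n \<epsilon>. fsupp \<nu> \<subseteq> fsupp \<zeta>})"
  obtain w0 where w0: "w0 \<in> W" "(\<Union>i<n. U i) \<subseteq> w0" using assms(11) by blast
  have AF: "A \<subseteq> FinP X" unfolding A_def P_Ucal_def VietM_def by auto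
  have "wopen_in A {\<zeta>\<in>A. F \<zeta> \<inter> S \<noteq> {}}"
    unfolding wopen_in_def
  proof (intro conjI ballI)
    show "{\<zeta>\<in>A. F \<zeta> \<inter> S \<noteq> {}} \<subseteq> A" by blast
    fix \<zeta> assume "\<zeta> \<in> {\<zeta>\<in>A. F \<zeta> \<inter> S \<noteq> {}}"
    then obtain \<nu> where zA: "\<zeta> \<in> A" and nF: "\<nu> \<in> F \<zeta>" and nS: "\<nu> \<in> S" by blast
    have zP: "\<zeta> \<in> FinP X" using zA AF by blast
    have nP: "\<nu> \<in> FinP X" using nS So unfolding wopen_in_def by blast
    obtain eS where eS: "eS > 0" "\<forall>\<nu>'\<in>FinP X. wass \<nu> \<nu>' < eS \<longrightarrow> \<nu>' \<in> S"
      using So nS unfolding wopen_in_def by blast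
    define D where "D = fsupp \<nu>"
    have fD: "finite D" and s1: "sum \<nu> D = 1" and nnn: "\<forall>x. 0 \<le> \<nu> x"
      using nP unfolding D_def FinP_def by auto
    have Dne: "D \<noteq> {}" using s1 by auto
    have DU: "D \<subseteq> (\<Union>i<n. U i)" and Dz: "D \<subseteq> fsupp \<zeta>"
      and nmass: "\<forall>i<n. \<bar>fmass \<nu> (U i) - fmass \<mu> (U i)\<bar> \<le> \<epsilon>"
      using nF unfolding F_def P_mu_def D_def by auto
    have "\<forall>a\<in>D. \<exists>i d. i < n \<and> a \<in> U i \<and> d > 0 \<and> (\<forall>b\<in>X. dist a b < d \<longrightarrow> b \<in> U i)"
    proof
      fix a assume "a \<in> D"
      then obtain i where i: "i < n" "a \<in> U i" using DU by blast
      then obtain d where "d > 0" "ball a d \<inter> X \<subseteq> U i"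
        using assms(8) openin_contains_ball by metis
      then show "\<exists>i d. i < n \<and> a \<in> U i \<and> d > 0 \<and> (\<forall>b\<in>X. dist a b < d \<longrightarrow> b \<in> U i)"
        using i by (auto simp: ball_def)
    qed
    then obtain ia da where iad: "\<forall>a\<in>D. ia a < n \<and> a \<in> U (ia a) \<and> da a > 0 \<and>
        (\<forall>b\<in>X. dist a b < da a \<longrightarrow> b \<in> U (ia a))"
      by metis
    define \<delta> where "\<delta> a = min (da a) (eS/2)" for a
    have zpos: "\<zeta> a > 0" if "a \<in> D" for a
    proof -
      have "\<zeta> a \<noteq> 0" using that Dz by (auto simp: fsupp_def)
      moreover have "\<zeta> a \<ge> 0" using zP by (auto simp: FinP_def)
      ultimately show ?thesis by simp
    qed
    have dpos: "\<delta> a > 0" if "a \<in> D" for a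
      using iad that eS(1) by (auto simp: \<delta>_def)
    define e where "e = Min ((\<lambda>a. \<zeta> a * \<delta> a) ` D)"
    have epos: "e > 0" unfolding e_def using fD Dne zpos dpos by (auto simp: Min_gr_iff)
    show "\<exists>e>0. \<forall>\<zeta>'\<in>A. wass \<zeta> \<zeta>' < e \<longrightarrow> \<zeta>' \<in> {\<zeta>\<in>A. F \<zeta> \<inter> S \<noteq> {}}"
    proof (intro exI conjI ballI impI)
      show "e > 0" by (rule epos)
      fix \<zeta>' assume z'A: "\<zeta>' \<in> A" and we: "wass \<zeta> \<zeta>' < e"
      have z'P: "\<zeta>' \<in> FinP X" using z'A AF by blast
      have "\<forall>a\<in>D. \<exists>b. b \<in> fsupp \<zeta>' \<and> dist a b < \<delta> a"
      proof
        fix a assume a: "a \<in> D"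
        have "e \<le> \<zeta> a * \<delta> a" unfolding e_def using fD a by simp
        then show "\<exists>b. b \<in> fsupp \<zeta>' \<and> dist a b < \<delta> a"
          using near_point[OF zP z'P zpos[OF a] dpos[OF a]] we by simp
      qed
      then obtain f where f: "\<forall>a\<in>D. f a \<in> fsupp \<zeta>' \<and> dist a (f a) < \<delta> a" by metis
      have z'X: "fsupp \<zeta>' \<subseteq> X" using z'P by (auto simp: FinP_def)
      have fU: "f a \<in> U (ia a)" if "a \<in> D" for a
        using iad f that z'X by (auto simp: \<delta>_def)
      define \<nu>' where "\<nu>' = push \<nu> f"
      have fDX: "f ` fsupp \<nu> \<subseteq> X" using f z'X D_def by auto
      have n'P: "\<nu>' \<in> FinP X" unfolding \<nu>'_def by (rule push_FinP[OF nP fDX])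
      have n'supp: "fsupp \<nu>' \<subseteq> f ` D" unfolding \<nu>'_def D_def by (rule push_supp[OF nP])
      have n'U: "fsupp \<nu>' \<subseteq> (\<Union>i<n. U i)" using n'supp fU iad by blast
      have n'V: "\<nu>' \<in> VietM X W" unfolding VietM_def using n'P n'U w0 by blast
      have mass: "fmass \<nu>' (U i) = fmass \<nu> (U i)" if i: "i < n" for i
      proof -
        have "fmass \<nu>' (U i) = (\<Sum>a\<in>{a\<in>D. f a \<in> U i}. \<nu> a)"
          unfolding fmass_def \<nu>'_def D_def by (rule push_mass[OF nP])
        also have "{a\<in>D. f a \<in> U i} = D \<inter> U i"
        proof (intro equalityI subsetI)
          fix a assume "a \<in> {a\<in>D. f a \<in> U i}"
          then have "a \<in> D" "f a \<in> U i" by auto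
          then have "ia a = i" using fU[of a] iad assms(9) i by blast
          then show "a \<in> D \<inter> U i" using iad \<open>a \<in> D\<close> by blast
        next
          fix a assume a: "a \<in> D \<inter> U i"
          then have "ia a = i" using iad assms(9) i by blast
          then show "a \<in> {a\<in>D. f a \<in> U i}" using fU a by auto
        qed
        finally show ?thesis unfolding fmass_def D_def .
      qed
      have n'P_mu: "\<nu>' \<in> P_mu X W \<mu> U n \<epsilon>"
        unfolding P_mu_def using n'V n'U mass nmass by auto
      have "wass \<nu> \<nu>' \<le> (\<Sum>a\<in>D. \<nu> a * dist a (f a))"
        unfolding \<nu>'_def D_def by (rule push_wass[OF nP])
      also have "\<dots> \<le> (\<Sum>a\<in>D. \<nu> a * (eS/2))"
        apply (rule sum_mono)
        apply (rule mult_left_mono)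
        using f nnn by (auto simp: \<delta>_def)
      also have "\<dots> = eS/2" using s1 by (simp only: sum_distrib_right[symmetric])
      finally have "wass \<nu> \<nu>' < eS" using eS(1) by simp
      then have "\<nu>' \<in> S" using eS(2) n'P by blast
      moreover have "fsupp \<nu>' \<subseteq> fsupp \<zeta>'" using n'supp f by auto
      ultimately have "\<nu>' \<in> F \<zeta>' \<inter> S" using n'P_mu unfolding F_def by blast
      then show "\<zeta>' \<in> {\<zeta>\<in>A. F \<zeta> \<inter> S \<noteq> {}}" using z'A by blast
    qed
  qed
  then show "wopen_in (P_Ucal X W U n \<inter> {\<nu> \<in> VietM X W. wass \<mu> \<nu> < r})
     {\<zeta> \<in> P_Ucal X W U n \<inter> {\<nu> \<in> VietM X W. wass \<mu> \<nu> < r}.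
      {\<nu> \<in> P_mu X W \<mu> U n \<epsilon>. fsupp \<nu> \<subseteq> fsupp \<zeta>} \<inter> S \<noteq> {}}"
    unfolding A_def F_def .
qed

end
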